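(* Let $\psi=(x,y,z):\Sigma\to\mathbb{R}^3$ be a $[\varphi,\vec e_3]$-minimal immersion, $\xi=u+iv$ a conformal parameter for $\psi$ with induced metric $ds^2=E|d\xi|^2$, and let $\psi^*=(x^*,y^*,z^* ):\Sigma\to\mathbb{L}^3$ be a map satisfying $x^*_\xi=-ie^{\varphi(z)}y_\xi$, $y^*_\xi=ie^{\varphi(z)}x_\xi$, $z^*_\xi=e^{\varphi(z)}z_\xi$. Then $\xi$ is also a conformal parameter for $\psi^*$, $x^{*2}_\xi+y^{*2}_\xi-z^{*2}_\xi=0$, and $$E^*:=2(|x^*_\xi|^2+|y^*_\xi|^2-|z^*_\xi|^2)=2e^{2\varphi}\eta^2(|x_\xi|^2+|y_\xi|^2+|z_\xi|^2)=e^{2\varphi}\eta^2E,$$ where $\eta=\langle N,\vec e_3\rangle$ is the angle function of $\psi$ with respect to the unit normal $N=-i\,\dfrac{\psi_\xi\wedge\psi_{\bar\xi}}{|\psi_\xi\wedge\psi_{\bar\xi}|}$. Furthermore, $\eta\neq0$ (i.e. $\psi$ is locally a vertical graph $z=z(x,y)$) if and only if $\psi^*$ is an immersion, and in this case a timelike unit normal for $\psi^*$ is $$N^*=i\frac{\psi^*_\xi\wedge_{\mathbb{L}^3}\psi^*_{\bar\xi}}{\|\psi^*_\xi\wedge_{\mathbb{L}^3}\psi^*_{\bar\xi}\|}=\frac{1}{\eta E}(\eta_1,\eta_2,E)=\big(-z_x,-z_y,\sqrt{1+z_x^2+z_y^2}\big),$$ where $\eta>0$ and $-2i\psi_\xi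\wedge\psi_{\bar\xi}=(\eta_1,\eta_2,\eta_3)$.
   Context: $\varphi$ is a smooth function on an open interval $I$, $\vec e_3=(0,0,1)$, $\wedge$ is the Euclidean cross product. An immersion $\psi=(x,y,z)$ into $\mathbb{R}^3$ with $z\in I$ is $[\varphi,\vec e_3]$-minimal if for every conformal parameter $\xi$: $2x_{\xi\bar\xi}+\dot\varphi(z)(z_\xi x_{\bar\xi}+z_{\bar\xi}x_\xi)=0$, $2y_{\xi\bar\xi}+\dot\varphi(z)(z_\xi y_{\bar\xi}+z_{\bar\xi}y_\xi)=0$, $2z_{\xi\bar\xi}-\dot\varphi(z)(|x_\xi|^2+|y_\xi|^2-|z_\xi|^2)=0$ (equivalently mean curvature vector $\dot\varphi(z)\vec e_3^\perp$). $\mathbb{L}^3$ is $\mathbb{R}^3$ with $\langle\langle\cdot,\cdot\rangle\rangle=dx^2+dy^2-dz^2$, $\|V\|=\sqrt{|\langle\langle V,V\rangle\rangle|}$, and $\wedge_{\mathbb{L}^3}$ is defined by $\langle\langle A\wedge_{\mathbb{L}^3}B,C\rangle\rangle=-\det(A,B,C)$. In $e^{2\varphi}$, $\varphi$ means $\varphi(z)$. *)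

theory Defs
  imports "HOL-Analysis.Analysis"
begin

text \<open>Local setting: an open set U of the complex plane is the domain of the conformal
parameter xi = u + i v. Real-valued functions on U are the coordinate functions.\<close>

type_synonym cvec = "complex \<times> complex \<times> complex"

fun pdiff_iter :: "bool list \<Rightarrow> (complex \<Rightarrow> 'a::real_normed_vector) \<Rightarrow> complex \<Rightarrow> 'a" where
  "pdiff_iter [] f = f"
| "pdiff_iter (b # bs) f = (\<lambda>p. frechet_derivative (pdiff_iter bs f) (at p) (if b then 1 else \<i>))"

definition smooth_on :: "complex set \<Rightarrow> (complex \<Rightarrow> 'a::real_normed_vector) \<Rightarrow> bool" where
  "smooth_on U f \<longleftrightarrow> (\<forall>bs. pdiff_iter bs f differentiable_on U)"

definition smooth_real_on :: "real set \<Rightarrow> (real \<Rightarrow> real) \<Rightarrow> bool" where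
  "smooth_real_on I f \<longleftrightarrow> (\<forall>n. \<forall>t\<in>I. ((deriv ^^ n) f) differentiable (at t))"

definition Dxi :: "(complex \<Rightarrow> complex) \<Rightarrow> complex \<Rightarrow> complex" where
  "Dxi f p = (frechet_derivative f (at p) 1 - \<i> * frechet_derivative f (at p) \<i>) / 2"

definition Dxib :: "(complex \<Rightarrow> complex) \<Rightarrow> complex \<Rightarrow> complex" where
  "Dxib f p = (frechet_derivative f (at p) 1 + \<i> * frechet_derivative f (at p) \<i>) / 2"

definition cf :: "(complex \<Rightarrow> real) \<Rightarrow> complex \<Rightarrow> complex" where
  "cf f = (\<lambda>q. complex_of_real (f q))"

definition immersion_at :: "(complex \<Rightarrow> real) \<Rightarrow> (complex \<Rightarrow> real) \<Rightarrow> (complex \<Rightarrow> real) \<Rightarrow> complex \<Rightarrow> bool" where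
  "immersion_at x y z p \<longleftrightarrow>
     (\<lambda>q. (x q, y q, z q)) differentiable (at p) \<and>
     inj (frechet_derivative (\<lambda>q. (x q, y q, z q)) (at p))"

definition Dxi3 :: "(complex \<Rightarrow> real) \<Rightarrow> (complex \<Rightarrow> real) \<Rightarrow> (complex \<Rightarrow> real) \<Rightarrow> complex \<Rightarrow> cvec" where
  "Dxi3 x y z p = (Dxi (cf x) p, Dxi (cf y) p, Dxi (cf z) p)"

definition Dxib3 :: "(complex \<Rightarrow> real) \<Rightarrow> (complex \<Rightarrow> real) \<Rightarrow> (complex \<Rightarrow> real) \<Rightarrow> complex \<Rightarrow> cvec" where
  "Dxib3 x y z p = (Dxib (cf x) p, Dxib (cf y) p, Dxib (cf z) p)"

definition ccross :: "cvec \<Rightarrow> cvec \<Rightarrow> cvec" where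
  "ccross = (\<lambda>(a1,a2,a3) (b1,b2,b3). (a2*b3 - a3*b2, a3*b1 - a1*b3, a1*b2 - a2*b1))"

definition linner :: "cvec \<Rightarrow> cvec \<Rightarrow> complex" where
  "linner = (\<lambda>(a1,a2,a3) (b1,b2,b3). a1*b1 + a2*b2 - a3*b3)"

text \<open>Lorentzian cross product, characterised by linner (A x_L B) C = - det(A,B,C);
  written out explicitly: (-(AxB)_1, -(AxB)_2, (AxB)_3).\<close>
definition lcross :: "cvec \<Rightarrow> cvec \<Rightarrow> cvec" where
  "lcross A B = (case ccross A B of (w1,w2,w3) \<Rightarrow> (-w1, -w2, w3))"

definition cnorm3 :: "cvec \<Rightarrow> real" where
  "cnorm3 = (\<lambda>(a1,a2,a3). sqrt ((cmod a1)^2 + (cmod a2)^2 + (cmod a3)^2))"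

definition lnorm3 :: "cvec \<Rightarrow> real" where
  "lnorm3 = (\<lambda>(a1,a2,a3). sqrt \<bar>(cmod a1)^2 + (cmod a2)^2 - (cmod a3)^2\<bar>)"

definition cscale :: "complex \<Rightarrow> cvec \<Rightarrow> cvec" where
  "cscale c = (\<lambda>(a1,a2,a3). (c*a1, c*a2, c*a3))"

definition Efac :: "(complex \<Rightarrow> real) \<Rightarrow> (complex \<Rightarrow> real) \<Rightarrow> (complex \<Rightarrow> real) \<Rightarrow> complex \<Rightarrow> real" where
  "Efac x y z p = 2 * ((cmod (Dxi (cf x) p))^2 + (cmod (Dxi (cf y) p))^2 + (cmod (Dxi (cf z) p))^2)"

definition Estar :: "(complex \<Rightarrow> real) \<Rightarrow> (complex \<Rightarrow> real) \<Rightarrow> (complex \<Rightarrow> real) \<Rightarrow> complex \<Rightarrow> real" where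
  "Estar x y z p = 2 * ((cmod (Dxi (cf x) p))^2 + (cmod (Dxi (cf y) p))^2 - (cmod (Dxi (cf z) p))^2)"

definition Nvec :: "(complex \<Rightarrow> real) \<Rightarrow> (complex \<Rightarrow> real) \<Rightarrow> (complex \<Rightarrow> real) \<Rightarrow> complex \<Rightarrow> cvec" where
  "Nvec x y z p = (let W = ccross (Dxi3 x y z p) (Dxib3 x y z p)
                   in cscale (- \<i> / complex_of_real (cnorm3 W)) W)"

text \<open>Angle function eta = <N, e3> (N is a real vector; we take its third component).\<close>
definition eta :: "(complex \<Rightarrow> real) \<Rightarrow> (complex \<Rightarrow> real) \<Rightarrow> (complex \<Rightarrow> real) \<Rightarrow> complex \<Rightarrow> real" where
  "eta x y z p = Re (snd (snd (Nvec x y z p)))"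

definition etavec :: "(complex \<Rightarrow> real) \<Rightarrow> (complex \<Rightarrow> real) \<Rightarrow> (complex \<Rightarrow> real) \<Rightarrow> complex \<Rightarrow> cvec" where
  "etavec x y z p = cscale (-2 * \<i>) (ccross (Dxi3 x y z p) (Dxib3 x y z p))"

definition Nstar :: "(complex \<Rightarrow> real) \<Rightarrow> (complex \<Rightarrow> real) \<Rightarrow> (complex \<Rightarrow> real) \<Rightarrow> complex \<Rightarrow> cvec" where
  "Nstar x y z p = (let W = lcross (Dxi3 x y z p) (Dxib3 x y z p)
                   in cscale (\<i> / complex_of_real (lnorm3 W)) W)"

end

theory Submission imports Defs begin

lemma dxi_real:
  fixes f :: "complex \<Rightarrow> real"
  assumes "f differentiable (at p)"
  shows "Dxi (cf f) p = Complex (frechet_derivative f (at p) 1 / 2) (- frechet_derivative f (at p) \<i> / 2)"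
    and "Dxib (cf f) p = Complex (frechet_derivative f (at p) 1 / 2) (frechet_derivative f (at p) \<i> / 2)"
proof -
  have "(f has_derivative frechet_derivative f (at p)) (at p)"
    using assms frechet_derivative_works by blast
  then have "(cf f has_derivative (\<lambda>h. of_real (frechet_derivative f (at p) h))) (at p)"
    unfolding cf_def by (rule has_derivative_of_real)
  then have fd: "frechet_derivative (cf f) (at p) = (\<lambda>h. of_real (frechet_derivative f (at p) h))"
    using frechet_derivative_at by metis
  show "Dxi (cf f) p = Complex (frechet_derivative f (at p) 1 / 2) (- frechet_derivative f (at p) \<i> / 2)"
    unfolding Dxi_def fd by (simp add: complex_eq_iff)
  show "Dxib (cf f) p = Complex (frechet_derivative f (at p) 1 / 2) (frechet_derivative f (at p) \<i> / 2)"
    unfolding Dxib_def fd by (simp add: complex_eq_iff)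
qed

lemma lin_dec:
  fixes f' :: "complex \<Rightarrow> 'b::real_normed_vector"
  assumes "bounded_linear f'"
  shows "f' h = Re h *\<^sub>R f' 1 + Im h *\<^sub>R f' \<i>"
proof -
  have h: "h = Re h *\<^sub>R 1 + Im h *\<^sub>R \<i>" by (simp add: complex_eq_iff)
  interpret bounded_linear f' by fact
  have "f' h = f' (Re h *\<^sub>R 1 + Im h *\<^sub>R \<i>)" using h by metis
  also have "\<dots> = Re h *\<^sub>R f' 1 + Im h *\<^sub>R f' \<i>" by (simp only: add scale)
  finally show ?thesis .
qed

lemma deriv_form:
  fixes f :: "complex \<Rightarrow> real"
  assumes "(f has_derivative f') F"
  shows "(f has_derivative (\<lambda>h. Re h * f' 1 + Im h * f' \<i>)) F"
proof -
  have eq: "(\<lambda>h. Re h * f' 1 + Im h * f' \<i>) = f'"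
    by (rule ext, rule lin_dec[OF has_derivative_bounded_linear[OF assms], unfolded real_scaleR_def, symmetric])
  show ?thesis by (subst eq) (rule assms)
qed

lemma triple_deriv:
  fixes f g k :: "complex \<Rightarrow> real"
  assumes "f differentiable (at p)" "g differentiable (at p)" "k differentiable (at p)"
  shows "((\<lambda>q. (f q, g q, k q)) has_derivative
     (\<lambda>h. (Re h * frechet_derivative f (at p) 1 + Im h * frechet_derivative f (at p) \<i>,
           Re h * frechet_derivative g (at p) 1 + Im h * frechet_derivative g (at p) \<i>,
           Re h * frechet_derivative k (at p) 1 + Im h * frechet_derivative k (at p) \<i>))) (at p)"
proof -
  have D: "(f has_derivative frechet_derivative f (at p)) (at p)"
     "(g has_derivative frechet_derivative g (at p)) (at p)"
     "(k has_derivative frechet_derivative k (at p)) (at p)"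
    using assms frechet_derivative_works by blast+
  show ?thesis
    by (intro has_derivative_Pair deriv_form D)
qed

lemma lin2:
  fixes g' :: "real \<times> real \<Rightarrow> real"
  assumes "bounded_linear g'"
  shows "g' (a, b) = a * g' (1, 0) + b * g' (0, 1)"
proof -
  interpret bounded_linear g' by fact
  have "(a, b) = a *\<^sub>R (1::real, 0::real) + b *\<^sub>R (0, 1)" by simp
  then have "g' (a, b) = g' (a *\<^sub>R (1::real, 0::real) + b *\<^sub>R (0, 1))" by metis
  also have "\<dots> = a * g' (1, 0) + b * g' (0, 1)" by (simp only: add scale) simp
  finally show ?thesis .
qed

lemma sqrt_sq_eq: "(c::real) \<ge> 0 \<Longrightarrow> a = c^2 \<Longrightarrow> sqrt a = c" by simp


lemma alg:
  fixes xu xv yu yv zu zv :: real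
  assumes hE: "xv^2+yv^2+zv^2 = xu^2+yu^2+zu^2" and hO: "xu*xv+yu*yv+zu*zv = 0"
  defines "E \<equiv> xu^2+yu^2+zu^2" and "D \<equiv> xu*yv - xv*yu"
    and "A1 \<equiv> yu*zv - zu*yv" and "A2 \<equiv> zu*xv - xu*zv"
  shows "A1^2 + A2^2 + D^2 = E^2"
    and "A1^2 + A2^2 = E*(zu^2+zv^2)"
    and "E*(E - zu^2 - zv^2) = D^2"
    and "-A1*yv + A2*xv - E*zu = 0"
    and "A1*yu - A2*xu - E*zv = 0"
    and "(xv*zv + zu*xu)*E = -A1*D"
    and "(zu*yu + yv*zv)*E = -A2*D"
    and "(xu*zu+xv*zv)^2 + (yu*zu+yv*zv)^2 = (zu^2+zv^2)*(E - zu^2 - zv^2)"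
  using hE hO unfolding E_def D_def A1_def A2_def by algebra+

theorem proposition2:
  fixes \<phi> :: "real \<Rightarrow> real" and I :: "real set" and U :: "complex set"
    and x y z xs ys zs :: "complex \<Rightarrow> real"
  assumes I: "is_interval I" "open I" and phi: "smooth_real_on I \<phi>"
    and U: "open U"
    and smooth: "smooth_on U x" "smooth_on U y" "smooth_on U z"
    and zI: "z ` U \<subseteq> I"
    and imm: "\<forall>p\<in>U. immersion_at x y z p"
    and conf: "\<forall>p\<in>U. (Dxi (cf x) p)^2 + (Dxi (cf y) p)^2 + (Dxi (cf z) p)^2 = 0"
    and minx: "\<forall>p\<in>U. 2 * Dxib (Dxi (cf x)) p
        + complex_of_real (deriv \<phi> (z p)) * (Dxi (cf z) p * Dxib (cf x) p + Dxib (cf z) p * Dxi (cf x) p) = 0"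
    and miny: "\<forall>p\<in>U. 2 * Dxib (Dxi (cf y)) p
        + complex_of_real (deriv \<phi> (z p)) * (Dxi (cf z) p * Dxib (cf y) p + Dxib (cf z) p * Dxi (cf y) p) = 0"
    and minz: "\<forall>p\<in>U. 2 * Dxib (Dxi (cf z)) p
        - complex_of_real (deriv \<phi> (z p) * ((cmod (Dxi (cf x) p))^2 + (cmod (Dxi (cf y) p))^2
                                              - (cmod (Dxi (cf z) p))^2)) = 0"
    and dstar: "xs differentiable_on U" "ys differentiable_on U" "zs differentiable_on U"
    and star: "\<forall>p\<in>U. Dxi (cf xs) p = - \<i> * complex_of_real (exp (\<phi> (z p))) * Dxi (cf y) p"
              "\<forall>p\<in>U. Dxi (cf ys) p = \<i> * complex_of_real (exp (\<phi> (z p))) * Dxi (cf x) p"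
              "\<forall>p\<in>U. Dxi (cf zs) p = complex_of_real (exp (\<phi> (z p))) * Dxi (cf z) p"
  shows "\<forall>p\<in>U. (Dxi (cf xs) p)^2 + (Dxi (cf ys) p)^2 - (Dxi (cf zs) p)^2 = 0
           \<and> Estar xs ys zs p = 2 * exp (\<phi> (z p))^2 * (eta x y z p)^2
                 * ((cmod (Dxi (cf x) p))^2 + (cmod (Dxi (cf y) p))^2 + (cmod (Dxi (cf z) p))^2)
           \<and> Estar xs ys zs p = exp (\<phi> (z p))^2 * (eta x y z p)^2 * Efac x y z p
           \<and> (eta x y z p \<noteq> 0 \<longleftrightarrow> immersion_at xs ys zs p)
           \<and> (eta x y z p \<noteq> 0 \<longrightarrow>
                (let d = complex_of_real (eta x y z p * Efac x y z p);
                     Nf = (fst (etavec x y z p) / d, fst (snd (etavec x y z p)) / d,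
                           complex_of_real (Efac x y z p) / d)
                 in linner Nf Nf = -1
                    \<and> linner Nf (Dxi3 xs ys zs p) = 0
                    \<and> Nstar xs ys zs p = cscale (-1) Nf
                    \<and> (eta x y z p > 0 \<longrightarrow>
                         (\<forall>V g. open V \<and> p \<in> V \<and> V \<subseteq> U
                            \<and> (g :: real \<times> real \<Rightarrow> real) differentiable (at (x p, y p))
                            \<and> (\<forall>q\<in>V. z q = g (x q, y q)) \<longrightarrow>
                            (let gx = frechet_derivative g (at (x p, y p)) (1, 0);
                                 gy = frechet_derivative g (at (x p, y p)) (0, 1)
                             in Nf = (complex_of_real (- gx), complex_of_real (- gy),
                                      complex_of_real (sqrt (1 + gx^2 + gy^2))))))))"
  apply (intro ballI)
  subgoal premises pr for p
proof -
  have pU: "p \<in> U" by (rule pr)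
  have dif: "\<And>f::complex\<Rightarrow>real. f differentiable_on U \<Longrightarrow> f differentiable (at p)"
    using U pU differentiable_on_eq_differentiable_at by blast
  have sm: "\<And>f::complex\<Rightarrow>real. smooth_on U f \<Longrightarrow> f differentiable_on U"
    unfolding smooth_on_def by (metis pdiff_iter.simps(1))
  have dx: "x differentiable (at p)" and dy: "y differentiable (at p)" and dz: "z differentiable (at p)"
    using dif sm smooth by blast+
  have dxs: "xs differentiable (at p)" and dys: "ys differentiable (at p)" and dzs: "zs differentiable (at p)"
    using dif dstar by blast+
  define xu where "xu = frechet_derivative x (at p) 1"
  define xv where "xv = frechet_derivative x (at p) \<i>"
  define yu where "yu = frechet_derivative y (at p) 1"
  define yv where "yv = frechet_derivative y (at p) \<i>"
  define zu where "zu = frechet_derivative z (at p) 1"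
  define zv where "zv = frechet_derivative z (at p) \<i>"
  define xsu where "xsu = frechet_derivative xs (at p) 1"
  define xsv where "xsv = frechet_derivative xs (at p) \<i>"
  define ysu where "ysu = frechet_derivative ys (at p) 1"
  define ysv where "ysv = frechet_derivative ys (at p) \<i>"
  define zsu where "zsu = frechet_derivative zs (at p) 1"
  define zsv where "zsv = frechet_derivative zs (at p) \<i>"
  define e where "e = exp (\<phi> (z p))"
  have epos: "e > 0" unfolding e_def by simp
  have ax: "Dxi (cf x) p = Complex (xu/2) (-xv/2)" "Dxib (cf x) p = Complex (xu/2) (xv/2)"
    using dxi_real[OF dx] unfolding xu_def xv_def by auto
  have ay: "Dxi (cf y) p = Complex (yu/2) (-yv/2)" "Dxib (cf y) p = Complex (yu/2) (yv/2)"
    using dxi_real[OF dy] unfolding yu_def yv_def by auto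
  have az: "Dxi (cf z) p = Complex (zu/2) (-zv/2)" "Dxib (cf z) p = Complex (zu/2) (zv/2)"
    using dxi_real[OF dz] unfolding zu_def zv_def by auto
  have axs0: "Dxi (cf xs) p = Complex (xsu/2) (-xsv/2)" "Dxib (cf xs) p = Complex (xsu/2) (xsv/2)"
    using dxi_real[OF dxs] unfolding xsu_def xsv_def by auto
  have ays0: "Dxi (cf ys) p = Complex (ysu/2) (-ysv/2)" "Dxib (cf ys) p = Complex (ysu/2) (ysv/2)"
    using dxi_real[OF dys] unfolding ysu_def ysv_def by auto
  have azs0: "Dxi (cf zs) p = Complex (zsu/2) (-zsv/2)" "Dxib (cf zs) p = Complex (zsu/2) (zsv/2)"
    using dxi_real[OF dzs] unfolding zsu_def zsv_def by auto
  have sx: "xsu = -e*yv \<and> xsv = e*yu"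
    using star(1) pU axs0 ay unfolding e_def by (auto simp: complex_eq_iff)
  have sy: "ysu = e*xv \<and> ysv = -e*xu"
    using star(2) pU ays0 ax unfolding e_def by (auto simp: complex_eq_iff)
  have sz: "zsu = e*zu \<and> zsv = e*zv"
    using star(3) pU azs0 az unfolding e_def by (auto simp: complex_eq_iff)
  have axs: "Dxi (cf xs) p = Complex (-e*yv/2) (-(e*yu)/2)" "Dxib (cf xs) p = Complex (-e*yv/2) (e*yu/2)"
    using axs0 sx by auto
  have ays: "Dxi (cf ys) p = Complex (e*xv/2) (-(-e*xu)/2)" "Dxib (cf ys) p = Complex (e*xv/2) (-e*xu/2)"
    using ays0 sy by auto
  have azs: "Dxi (cf zs) p = Complex (e*zu/2) (-(e*zv)/2)" "Dxib (cf zs) p = Complex (e*zu/2) (e*zv/2)"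
    using azs0 sz by auto
  have cf2: "(Complex (xu/2) (-xv/2))^2 + (Complex (yu/2) (-yv/2))^2 + (Complex (zu/2) (-zv/2))^2 = 0"
    using conf pU ax ay az by auto
  have hE: "xv^2+yv^2+zv^2 = xu^2+yu^2+zu^2" and hO: "xu*xv+yu*yv+zu*zv = 0"
    using cf2 by (auto simp: complex_eq_iff power2_eq_square algebra_simps)
  define E where "E = xu^2+yu^2+zu^2"
  define D where "D = xu*yv - xv*yu"
  define A1 where "A1 = yu*zv - zu*yv"
  define A2 where "A2 = zu*xv - xu*zv"
  note AL = alg[OF hE hO, folded E_def D_def A1_def A2_def]
  have Fxyz: "frechet_derivative (\<lambda>q. (x q, y q, z q)) (at p) =
      (\<lambda>h. (Re h * xu + Im h * xv, Re h * yu + Im h * yv, Re h * zu + Im h * zv))"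
    by (rule frechet_derivative_at[OF triple_deriv[OF dx dy dz, folded xu_def xv_def yu_def yv_def zu_def zv_def], symmetric])
  have ij: "inj (frechet_derivative (\<lambda>q. (x q, y q, z q)) (at p))"
    using imm pU unfolding immersion_at_def by blast
  have f1: "frechet_derivative (\<lambda>q. (x q, y q, z q)) (at p) 1 = (xu, yu, zu)"
    and f0: "frechet_derivative (\<lambda>q. (x q, y q, z q)) (at p) 0 = (0, 0, 0)"
    unfolding Fxyz by simp_all
  have "(xu, yu, zu) \<noteq> (0,0,0)"
    using injD[OF ij, of 1 0] f1 f0 by auto
  then have "0 < xu^2 \<or> 0 < yu^2 \<or> 0 < zu^2" by auto
  then have Epos: "E > 0" unfolding E_def
    using zero_le_power2[of xu] zero_le_power2[of yu] zero_le_power2[of zu] by linarith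
  have Efac: "Efac x y z p = E"
    unfolding Efac_def ax ay az using hE unfolding E_def 
    by (simp add: cmod_def power2_eq_square field_simps)
  have W: "ccross (Dxi3 x y z p) (Dxib3 x y z p) = (Complex 0 (A1/2), Complex 0 (A2/2), Complex 0 (D/2))"
    unfolding ccross_def Dxi3_def Dxib3_def ax ay az A1_def A2_def D_def
    by (simp add: complex_eq_iff algebra_simps divide_simps)
  have cnW: "cnorm3 (Complex 0 (A1/2), Complex 0 (A2/2), Complex 0 (D/2)) = E/2"
  proof -
    have "(A1/2)^2 + (A2/2)^2 + (D/2)^2 = (E/2)^2" using AL(1) by (simp add: power_divide field_simps)
    then show ?thesis unfolding cnorm3_def using Epos by (simp add: cmod_def)
  qed
  have eta: "eta x y z p = D/E"
    unfolding eta_def Nvec_def Let_def W cnW cscale_def using Epos by simp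
  have etavec: "etavec x y z p = (of_real A1, of_real A2, of_real D)"
    unfolding etavec_def W cscale_def by (simp add: complex_eq_iff)
  have C1: "(Dxi (cf xs) p)^2 + (Dxi (cf ys) p)^2 - (Dxi (cf zs) p)^2 = 0"
    unfolding axs ays azs using hE hO by (simp add: complex_eq_iff power2_eq_square; algebra)
  have S: "(cmod (Dxi (cf x) p))^2 + (cmod (Dxi (cf y) p))^2 + (cmod (Dxi (cf z) p))^2 = E/2"
    unfolding ax ay az cmod_power2 using hE unfolding E_def by (simp add: power2_eq_square field_simps)
  have Es: "Estar xs ys zs p = e^2 * (E - zu^2 - zv^2)"
    unfolding Estar_def axs ays azs cmod_power2 using hE unfolding E_def by (simp add: power2_eq_square field_simps; algebra)
  have etasq: "(eta x y z p)^2 = (E - zu^2 - zv^2)/E"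
  proof -
    have "(eta x y z p)^2 = D^2/E^2" unfolding eta by (simp add: power_divide)
    also have "\<dots> = E*(E - zu^2 - zv^2)/(E*E)" using AL(3) by (simp add: power2_eq_square)
    also have "\<dots> = (E - zu^2 - zv^2)/E" using Epos by simp
    finally show ?thesis .
  qed
  have C2: "Estar xs ys zs p = 2 * exp (\<phi> (z p))^2 * (eta x y z p)^2
                 * ((cmod (Dxi (cf x) p))^2 + (cmod (Dxi (cf y) p))^2 + (cmod (Dxi (cf z) p))^2)"
    unfolding Es S etasq e_def[symmetric] using Epos by simp
  have C3: "Estar xs ys zs p = exp (\<phi> (z p))^2 * (eta x y z p)^2 * Efac x y z p"
    unfolding Es Efac etasq e_def[symmetric] using Epos by simp
  have sx1: "xsu = -e*yv" and sx2: "xsv = e*yu" using sx by auto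
  have sy1: "ysu = e*xv" and sy2: "ysv = -e*xu" using sy by auto
  have sz1: "zsu = e*zu" and sz2: "zsv = e*zv" using sz by auto
  have Ts: "((\<lambda>q. (xs q, ys q, zs q)) has_derivative
      (\<lambda>h. (Re h * xsu + Im h * xsv, Re h * ysu + Im h * ysv, Re h * zsu + Im h * zsv))) (at p)"
    by (rule triple_deriv[OF dxs dys dzs, folded xsu_def xsv_def ysu_def ysv_def zsu_def zsv_def])
  have Fs: "frechet_derivative (\<lambda>q. (xs q, ys q, zs q)) (at p) =
      (\<lambda>h. (Re h * xsu + Im h * xsv, Re h * ysu + Im h * ysv, Re h * zsu + Im h * zsv))"
    by (rule frechet_derivative_at[OF Ts, symmetric])
  have C4: "eta x y z p \<noteq> 0 \<longleftrightarrow> immersion_at xs ys zs p"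
  proof
    assume "eta x y z p \<noteq> 0"
    then have Dnz: "D \<noteq> 0" unfolding eta by simp
    have "inj (frechet_derivative (\<lambda>q. (xs q, ys q, zs q)) (at p))"
      unfolding inj_def Fs
    proof (intro allI impI)
      fix h1 h2 :: complex
      assume "(Re h1 * xsu + Im h1 * xsv, Re h1 * ysu + Im h1 * ysv, Re h1 * zsu + Im h1 * zsv) =
              (Re h2 * xsu + Im h2 * xsv, Re h2 * ysu + Im h2 * ysv, Re h2 * zsu + Im h2 * zsv)"
      then have e1: "Re h1 * xsu + Im h1 * xsv = Re h2 * xsu + Im h2 * xsv"
        and e2: "Re h1 * ysu + Im h1 * ysv = Re h2 * ysu + Im h2 * ysv" by auto
      have q1: "e * (yu*(Im h1 - Im h2) - yv*(Re h1 - Re h2)) = 0"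
        using e1 unfolding sx1 sx2 by algebra
      have q2: "e * (xv*(Re h1 - Re h2) - xu*(Im h1 - Im h2)) = 0"
        using e2 unfolding sy1 sy2 by algebra
      have r1: "yu*(Im h1 - Im h2) - yv*(Re h1 - Re h2) = 0" using q1 epos by simp
      have r2: "xv*(Re h1 - Re h2) - xu*(Im h1 - Im h2) = 0" using q2 epos by simp
      have "(Re h1 - Re h2) * D = 0" using r1 r2 unfolding D_def by algebra
      moreover have "(Im h1 - Im h2) * D = 0" using r1 r2 unfolding D_def by algebra
      ultimately show "h1 = h2" using Dnz by (simp add: complex_eq_iff)
    qed
    then show "immersion_at xs ys zs p"
      unfolding immersion_at_def using Ts differentiableI by blast
  next
    assume im: "immersion_at xs ys zs p"
    show "eta x y z p \<noteq> 0"
    proof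
      assume "eta x y z p = 0"
      then have D0: "D = 0" unfolding eta using Epos by simp
      then have "E*(E - zu^2 - zv^2) = 0" using AL(3) by simp
      then have EZ: "E - zu^2 - zv^2 = 0" using Epos by simp
      then have "(xu*zu+xv*zv)^2 + (yu*zu+yv*zv)^2 = 0" using AL(8) by simp
      then have XZ: "xu*zu+xv*zv = 0" and YZ: "yu*zu+yv*zv = 0" by (simp_all add: sum_power2_eq_zero_iff)
      have hnz: "Complex zv (-zu) \<noteq> 0" using EZ Epos by (auto simp: complex_eq_iff)
      have "frechet_derivative (\<lambda>q. (xs q, ys q, zs q)) (at p) (Complex zv (-zu)) =
            frechet_derivative (\<lambda>q. (xs q, ys q, zs q)) (at p) 0"
        unfolding Fs sx1 sx2 sy1 sy2 sz1 sz2 using XZ YZ by (simp; algebra)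
      then have "Complex zv (-zu) = 0"
        using im unfolding immersion_at_def by (meson injD)
      then show False using hnz by simp
    qed
  qed
  have dd': "complex_of_real (eta x y z p * E) = complex_of_real D" unfolding eta using Epos by simp
  have enz: "e \<noteq> 0" using epos by simp
  define c1 where "c1 = xv*zv + zu*xu"
  define c2 where "c2 = zu*yu + yv*zv"
  have Q1: "c1*E = -A1*D" and Q2: "c2*E = -A2*D" unfolding c1_def c2_def by (rule AL(6), rule AL(7))
  have C5: "eta x y z p \<noteq> 0 \<longrightarrow>
      linner (complex_of_real (A1/D), complex_of_real (A2/D), complex_of_real (E/D))
             (complex_of_real (A1/D), complex_of_real (A2/D), complex_of_real (E/D)) = -1
    \<and> linner (complex_of_real (A1/D), complex_of_real (A2/D), complex_of_real (E/D)) (Dxi3 xs ys zs p) = 0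
    \<and> Nstar xs ys zs p = cscale (-1) (complex_of_real (A1/D), complex_of_real (A2/D), complex_of_real (E/D))
    \<and> (eta x y z p > 0 \<longrightarrow>
         (\<forall>V g. open V \<and> p \<in> V \<and> V \<subseteq> U
            \<and> (g :: real \<times> real \<Rightarrow> real) differentiable (at (x p, y p))
            \<and> (\<forall>q\<in>V. z q = g (x q, y q)) \<longrightarrow>
            (complex_of_real (A1/D), complex_of_real (A2/D), complex_of_real (E/D)) =
              (complex_of_real (- frechet_derivative g (at (x p, y p)) (1, 0)),
               complex_of_real (- frechet_derivative g (at (x p, y p)) (0, 1)),
               complex_of_real (sqrt (1 + (frechet_derivative g (at (x p, y p)) (1, 0))^2
                                        + (frechet_derivative g (at (x p, y p)) (0, 1))^2)))))"
  proof (intro impI conjI)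
    assume "eta x y z p \<noteq> 0"
    then have Dnz: "D \<noteq> 0" unfolding eta by simp
    have r1: "(A1/D)*(A1/D) + (A2/D)*(A2/D) - (E/D)*(E/D) = -1"
    proof -
      have "(A1/D)*(A1/D) + (A2/D)*(A2/D) - (E/D)*(E/D) = (A1^2+A2^2-E^2)/D^2"
        using Dnz by (simp add: field_simps power2_eq_square)
      also have "\<dots> = -1"
      proof -
        have n: "A1^2+A2^2-E^2 = -(D^2)" using AL(1) by linarith
        show ?thesis unfolding n using Dnz by simp
      qed
      finally show ?thesis .
    qed
    show "linner (complex_of_real (A1/D), complex_of_real (A2/D), complex_of_real (E/D))
             (complex_of_real (A1/D), complex_of_real (A2/D), complex_of_real (E/D)) = -1"
      unfolding linner_def using r1 by (simp add: complex_eq_iff)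
    show "linner (complex_of_real (A1/D), complex_of_real (A2/D), complex_of_real (E/D)) (Dxi3 xs ys zs p) = 0"
      unfolding linner_def Dxi3_def axs ays azs using AL(4) AL(5) Dnz
      by (simp add: complex_eq_iff field_simps; algebra)
    have Ws: "lcross (Dxi3 xs ys zs p) (Dxib3 xs ys zs p) =
       (Complex 0 (-(e^2*c1/2)), Complex 0 (-(e^2*c2/2)), Complex 0 (e^2*D/2))"
      unfolding lcross_def ccross_def Dxi3_def Dxib3_def axs ays azs D_def c1_def c2_def
      by (simp add: complex_eq_iff power2_eq_square; algebra)
    have key: "(e^2*c1/2)^2 + (e^2*c2/2)^2 - (e^2*D/2)^2 = -((e^2*D^2/(2*E))^2)"
      using AL(1) Q1 Q2 Epos by (simp add: field_simps power2_eq_square; algebra)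
    have ln: "lnorm3 (Complex 0 (-(e^2*c1/2)), Complex 0 (-(e^2*c2/2)), Complex 0 (e^2*D/2)) = e^2*D^2/(2*E)"
    proof -
      have "lnorm3 (Complex 0 (-(e^2*c1/2)), Complex 0 (-(e^2*c2/2)), Complex 0 (e^2*D/2))
          = sqrt \<bar>(e^2*c1/2)^2 + (e^2*c2/2)^2 - (e^2*D/2)^2\<bar>"
        unfolding lnorm3_def by (simp add: cmod_def)
      also have "\<dots> = e^2*D^2/(2*E)" unfolding key using Epos by simp
      finally show ?thesis .
    qed
    show "Nstar xs ys zs p = cscale (-1) (complex_of_real (A1/D), complex_of_real (A2/D), complex_of_real (E/D))"
    proof -
      have gen: "\<And>L t. \<i> / complex_of_real L * Complex 0 t = complex_of_real (-t/L)"
        by (simp add: complex_eq_iff)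
      have f1: "-(-(e^2*c1/2)) / (e^2*D^2/(2*E)) = -(A1/D)"
      proof -
        have "-(-(e^2*c1/2)) / (e^2*D^2/(2*E)) = c1*E/D^2" using enz Epos by (simp add: field_simps power2_eq_square)
        also have "\<dots> = -A1*D/D^2" by (simp add: Q1)
        also have "\<dots> = -(A1/D)" using Dnz by (simp add: power2_eq_square)
        finally show ?thesis .
      qed
      have f2: "-(-(e^2*c2/2)) / (e^2*D^2/(2*E)) = -(A2/D)"
      proof -
        have "-(-(e^2*c2/2)) / (e^2*D^2/(2*E)) = c2*E/D^2" using enz Epos by (simp add: field_simps power2_eq_square)
        also have "\<dots> = -A2*D/D^2" by (simp add: Q2)
        also have "\<dots> = -(A2/D)" using Dnz by (simp add: power2_eq_square)
        finally show ?thesis .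
      qed
      have f3: "-(e^2*D/2) / (e^2*D^2/(2*E)) = -(E/D)"
        using enz Epos Dnz by (simp add: field_simps power2_eq_square)
      show ?thesis
        unfolding Nstar_def Let_def Ws ln cscale_def prod.case gen f1 f2 f3 by simp
    qed
    assume "eta x y z p > 0"
    then have Dpos: "D > 0" unfolding eta using Epos by (simp add: zero_less_divide_iff)
    show "\<forall>V g. open V \<and> p \<in> V \<and> V \<subseteq> U
            \<and> (g :: real \<times> real \<Rightarrow> real) differentiable (at (x p, y p))
            \<and> (\<forall>q\<in>V. z q = g (x q, y q)) \<longrightarrow>
            (complex_of_real (A1/D), complex_of_real (A2/D), complex_of_real (E/D)) =
              (complex_of_real (- frechet_derivative g (at (x p, y p)) (1, 0)),
               complex_of_real (- frechet_derivative g (at (x p, y p)) (0, 1)),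
               complex_of_real (sqrt (1 + (frechet_derivative g (at (x p, y p)) (1, 0))^2
                                        + (frechet_derivative g (at (x p, y p)) (0, 1))^2)))"
    proof (intro allI impI)
      fix V and g :: "real \<times> real \<Rightarrow> real"
      assume H: "open V \<and> p \<in> V \<and> V \<subseteq> U \<and> g differentiable (at (x p, y p)) \<and> (\<forall>q\<in>V. z q = g (x q, y q))"
      define g' where "g' = frechet_derivative g (at (x p, y p))"
      define gx where "gx = g' (1, 0)"
      define gy where "gy = g' (0, 1)"
      have Dg: "(g has_derivative g') (at (x p, y p))"
        using H frechet_derivative_works unfolding g'_def by blast
      have Txy: "((\<lambda>q. (x q, y q)) has_derivative (\<lambda>h. (Re h * xu + Im h * xv, Re h * yu + Im h * yv))) (at p)"
        by (intro has_derivative_Pair deriv_form[OF frechet_derivative_works[THEN iffD1, OF dx], folded xu_def xv_def]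
             deriv_form[OF frechet_derivative_works[THEN iffD1, OF dy], folded yu_def yv_def])
      have Tc: "((g \<circ> (\<lambda>q. (x q, y q))) has_derivative (g' \<circ> (\<lambda>h. (Re h * xu + Im h * xv, Re h * yu + Im h * yv)))) (at p)"
        by (rule diff_chain_at[OF Txy Dg])
      have Tz: "(z has_derivative (g' \<circ> (\<lambda>h. (Re h * xu + Im h * xv, Re h * yu + Im h * yv)))) (at p)"
        by (rule has_derivative_transform_within_open[OF Tc, of V]) (use H in auto)
      have Fz: "frechet_derivative z (at p) = g' \<circ> (\<lambda>h. (Re h * xu + Im h * xv, Re h * yu + Im h * yv))"
        by (rule frechet_derivative_at[OF Tz, symmetric])
      have bl: "bounded_linear g'" using Dg has_derivative_bounded_linear by blast
      have "zu = g' (xu, yu)" unfolding zu_def Fz by simp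
      also have "\<dots> = xu*gx + yu*gy" unfolding gx_def gy_def by (rule lin2[OF bl])
      finally have zu': "zu = xu*gx + yu*gy" .
      have "zv = g' (xv, yv)" unfolding zv_def Fz by simp
      also have "\<dots> = xv*gx + yv*gy" unfolding gx_def gy_def by (rule lin2[OF bl])
      finally have zv': "zv = xv*gx + yv*gy" .
      have a1: "A1 = -gx*D" unfolding A1_def D_def zu' zv' by algebra
      have a2: "A2 = -gy*D" unfolding A2_def D_def zu' zv' by algebra
      have "E^2 = D^2 * (1 + gx^2 + gy^2)" using AL(1) unfolding a1 a2 by (simp add: algebra_simps power2_eq_square)
      then have "(E/D)^2 = 1 + gx^2 + gy^2" using Dnz by (simp add: power_divide)
      then have sq: "sqrt (1 + gx^2 + gy^2) = E/D" using Epos Dpos by (intro sqrt_sq_eq) simp_all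
      show "(complex_of_real (A1/D), complex_of_real (A2/D), complex_of_real (E/D)) =
              (complex_of_real (- frechet_derivative g (at (x p, y p)) (1, 0)),
               complex_of_real (- frechet_derivative g (at (x p, y p)) (0, 1)),
               complex_of_real (sqrt (1 + (frechet_derivative g (at (x p, y p)) (1, 0))^2
                                        + (frechet_derivative g (at (x p, y p)) (0, 1))^2)))"
        unfolding g'_def[symmetric] gx_def[symmetric] gy_def[symmetric] sq a1 a2 using Dnz by simp
    qed
  qed
  show ?thesis
    unfolding Let_def etavec Efac fst_conv snd_conv dd' of_real_divide[symmetric]
    using C1 C2 C3[unfolded Efac] C4 C5 by blast
qed
  done

end
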